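(* Let $P(x)=a_nx^n+a_{n-1}x^{n-1}+\cdots+a_1x$ with integer coefficients $a_i\ge 0$, $a_n\ne 0$, and $\gcd(a_n,\dots,a_1)=1$. For integers $0<t<a$ define $m_{a,t}=\dfrac{P(a)}{\gcd(P(a),P(t))}$. Then \[ \mathsf{dens}(\mathcal{L}(a_n,\dots,a_1))=\lim_{N\to\infty}\frac{\displaystyle\sum_{a=1}^{N}\ \sum_{J\subseteq\{1,\dots,a-1\}}(-1)^{|J|}\left\lfloor\frac{N}{\operatorname{lcm}(m_{a,t}:t\in J)}\right\rfloor}{N^2}. \]
   Context: $\mathbb{N}$ denotes the positive integers; $\operatorname{lcm}$ over the empty set is $1$. The family $\mathcal{F}(a_n,\dots,a_1)=\{y=q(a_nx^n+\cdots+a_1x): q\in\mathbb{Q}^+\}$. A point $(r,s)\in\mathbb{N}^2$ is $\mathcal{F}(a_n,\dots,a_1)$-visible if there is $q\in\mathbb{Q}^+$ with $s=q(a_nr^n+\cdots+a_1r)$ and no other point of $\mathbb{N}^2$ lies on the curve $y=q(a_nx^n+\cdots+a_1x)$ between the origin and $(r,s)$; $\mathcal{L}(a_n,\dots,a_1)$ is the set of all such points. For $S\subseteq\mathbb{N}^2$, $\mathsf{dens}(S)=\lim_{N\to\infty}|S\cap R_N|/N^2$ (when the limit exists), where $R_N=\{(x,y)\in\mathbb{Z}^2:1\le x,y\le N\}$. *)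

theory Defs
  imports Complex_Main
begin

definition polyP :: "(nat \<Rightarrow> int) \<Rightarrow> nat \<Rightarrow> int \<Rightarrow> int" where
  "polyP a n x = (\<Sum>i=1..n. a i * x ^ i)"

definition visible :: "(nat \<Rightarrow> int) \<Rightarrow> nat \<Rightarrow> nat \<times> nat \<Rightarrow> bool" where
  "visible a n p \<longleftrightarrow> (case p of (r, s) \<Rightarrow>
     1 \<le> r \<and> 1 \<le> s \<and>
     (\<exists>q::rat. q > 0 \<and> of_nat s = q * of_int (polyP a n (int r)) \<and>
        \<not> (\<exists>x y::nat. 1 \<le> x \<and> x < r \<and> 1 \<le> y \<and>
              of_nat y = q * of_int (polyP a n (int x)))))"

definition visL :: "(nat \<Rightarrow> int) \<Rightarrow> nat \<Rightarrow> (nat \<times> nat) set" where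
  "visL a n = {p. visible a n p}"

definition mval :: "(nat \<Rightarrow> int) \<Rightarrow> nat \<Rightarrow> nat \<Rightarrow> nat \<Rightarrow> int" where
  "mval a n b t = polyP a n (int b) div gcd (polyP a n (int b)) (polyP a n (int t))"

definition rhs_num :: "(nat \<Rightarrow> int) \<Rightarrow> nat \<Rightarrow> nat \<Rightarrow> real" where
  "rhs_num a n N = (\<Sum>b=1..N. \<Sum>J\<in>Pow {1..b-1}.
      (-1) ^ card J * of_int \<lfloor>real N / real_of_int (Lcm (mval a n b ` J))\<rfloor>)"

end

theory Submission
  imports Defs
begin

lemma polyP_pos:
  assumes "n \<ge> 1" "\<forall>i\<in>{1..n}. a i \<ge> 0" "a n \<noteq> 0" "x \<ge> 1"
  shows "polyP a n x > 0"
proof -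
  have an: "a n > 0" using assms by force
  have "a n * x ^ n > 0" using an assms(4) by simp
  also have "a n * x ^ n \<le> (\<Sum>i=1..n. a i * x ^ i)"
    by (rule member_le_sum) (use assms in auto)
  finally show ?thesis unfolding polyP_def .
qed

lemma dvd_gcd_iff_aux:
  fixes A B s :: int
  assumes "A \<noteq> 0"
  shows "A dvd s * B \<longleftrightarrow> (A div gcd A B) dvd s"
proof -
  define g where "g = gcd A B"
  have g0: "g \<noteq> 0" using assms by (simp add: g_def)
  define m where "m = A div g"
  define k where "k = B div g"
  have A: "A = g * m" by (simp add: m_def g_def)
  have B: "B = g * k" by (simp add: k_def g_def)
  have cop: "coprime m k" unfolding m_def k_def g_def using assms by (simp add: div_gcd_coprime)
  have "A dvd s * B \<longleftrightarrow> g * m dvd g * (s * k)" by (simp add: A B algebra_simps)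
  also have "\<dots> \<longleftrightarrow> m dvd s * k" using g0 by simp
  also have "\<dots> \<longleftrightarrow> m dvd s" using cop by (simp add: coprime_dvd_mult_left_iff)
  finally show ?thesis by (simp add: m_def g_def)
qed

lemma visible_iff:
  assumes "n \<ge> 1" "\<forall>i\<in>{1..n}. a i \<ge> 0" "a n \<noteq> 0" "r \<ge> 1" "s \<ge> 1"
  shows "visible a n (r, s) \<longleftrightarrow> (\<forall>t\<in>{1..r-1}. \<not> mval a n r t dvd int s)"
proof -
  define Pr where "Pr = polyP a n (int r)"
  have Pr: "Pr > 0" unfolding Pr_def using polyP_pos assms by simp
  have key: "(\<exists>y::nat. 1 \<le> y \<and> of_nat y = q * of_int (polyP a n (int x))) \<longleftrightarrow> mval a n r x dvd int s"
    if q: "q = of_nat s / of_int Pr" and x: "x \<ge> 1" for q :: rat and x :: nat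
  proof -
    define Px where "Px = polyP a n (int x)"
    have Px: "Px > 0" unfolding Px_def using polyP_pos assms x by simp
    have md: "mval a n r x dvd int s \<longleftrightarrow> Pr dvd int s * Px"
      unfolding mval_def Pr_def Px_def using dvd_gcd_iff_aux[of "polyP a n (int r)" "int s"] Pr
      by (simp add: Pr_def)
    show ?thesis
    proof
      assume "\<exists>y::nat. 1 \<le> y \<and> of_nat y = q * of_int (polyP a n (int x))"
      then obtain y :: nat where "of_nat y = q * of_int Px" unfolding Px_def by blast
      then have "(of_int (int y * Pr) :: rat) = of_int (int s * Px)"
        using Pr by (simp add: q field_simps)
      then have "int y * Pr = int s * Px" by (simp only: of_int_eq_iff)
      then have "Pr dvd int s * Px" by (metis dvd_triv_right)
      then show "mval a n r x dvd int s" using md by simp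
    next
      assume "mval a n r x dvd int s"
      then have d: "Pr dvd int s * Px" using md by simp
      define y where "y = nat (int s * Px div Pr)"
      have sp: "int s * Px > 0" using Px assms by simp
      have yi: "int y = int s * Px div Pr" unfolding y_def using d sp Pr
        by (smt (verit) nat_0_le pos_imp_zdiv_nonneg_iff)
      have "int y * Pr = int s * Px" using yi d by simp
      then have y1: "y \<ge> 1" using sp Pr
        by (metis less_one linorder_not_le mult_eq_0_iff of_nat_0 order_less_irrefl)
      have "(of_int (int y * Pr) :: rat) = of_int (int s * Px)" using \<open>int y * Pr = int s * Px\<close> by simp
      then have "of_nat y = q * of_int Px" using Pr by (simp add: q field_simps)
      then show "\<exists>y::nat. 1 \<le> y \<and> of_nat y = q * of_int (polyP a n (int x))"
        using y1 unfolding Px_def by blast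
    qed
  qed
  show ?thesis
  proof
    assume "visible a n (r, s)"
    then obtain q :: rat where q0: "q > 0" and qs: "of_nat s = q * of_int Pr"
      and no: "\<not> (\<exists>x y::nat. 1 \<le> x \<and> x < r \<and> 1 \<le> y \<and> of_nat y = q * of_int (polyP a n (int x)))"
      unfolding visible_def Pr_def by auto
    have q: "q = of_nat s / of_int Pr" using qs Pr by (simp add: field_simps)
    show "\<forall>t\<in>{1..r-1}. \<not> mval a n r t dvd int s"
    proof (intro ballI notI)
      fix t assume t: "t \<in> {1..r-1}" and dv: "mval a n r t dvd int s"
      then obtain y :: nat where "1 \<le> y \<and> of_nat y = q * of_int (polyP a n (int t))"
        using key[OF q, of t] by auto
      then show False using no t by auto
    qed
  next
    assume H: "\<forall>t\<in>{1..r-1}. \<not> mval a n r t dvd int s"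
    define q :: rat where "q = of_nat s / of_int Pr"
    have "q > 0" using Pr assms unfolding q_def by simp
    moreover have "of_nat s = q * of_int Pr" using Pr unfolding q_def by simp
    moreover have "\<not> (\<exists>x y::nat. 1 \<le> x \<and> x < r \<and> 1 \<le> y \<and> of_nat y = q * of_int (polyP a n (int x)))"
    proof
      assume "\<exists>x y::nat. 1 \<le> x \<and> x < r \<and> 1 \<le> y \<and> of_nat y = q * of_int (polyP a n (int x))"
      then obtain x y where x: "1 \<le> x" "x < r" and "1 \<le> y \<and> of_nat y = q * of_int (polyP a n (int x))"
        by blast
      then have "mval a n r x dvd int s" using key[OF q_def x(1)] by blast
      then show False using H x by auto
    qed
    ultimately show "visible a n (r, s)" unfolding visible_def Pr_def using assms by auto
  qed
qed


lemma card_mult_upto: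
  fixes d :: int assumes "d > 0"
  shows "card {s\<in>{1..N}. d dvd int s} = nat (int N div d)"
proof -
  obtain e where e: "d = int e" "e > 0" using assms by (metis pos_int_cases of_nat_0_less_iff)
  have "{s\<in>{1..N}. d dvd int s} = (\<lambda>k. e * k) ` {1..N div e}"
  proof (rule set_eqI, rule iffI)
    fix s assume "s \<in> {s\<in>{1..N}. d dvd int s}"
    then have s: "1 \<le> s" "s \<le> N" "e dvd s" using e by auto
    then obtain k where k: "s = e * k" by blast
    have "k \<ge> 1" using s k by (cases k) auto
    moreover have "k \<le> N div e" using s k e by (metis div_le_mono nonzero_mult_div_cancel_left not_gr0)
    ultimately show "s \<in> (\<lambda>k. e * k) ` {1..N div e}" using k by auto
  next
    fix s assume "s \<in> (\<lambda>k. e * k) ` {1..N div e}"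
    then obtain k where "k \<in> {1..N div e}" "s = e * k" by blast
    then have k: "s = e * k" "1 \<le> k" "k \<le> N div e" by auto
    have "e * k \<le> e * (N div e)" using k by simp
    also have "\<dots> \<le> N" by simp
    finally show "s \<in> {s\<in>{1..N}. d dvd int s}" using k e by auto
  qed
  moreover have "inj_on (\<lambda>k. e * k) {1..N div e}" using e by (auto simp: inj_on_def)
  ultimately have "card {s\<in>{1..N}. d dvd int s} = N div e" by (simp add: card_image)
  then show ?thesis using e by (metis nat_int zdiv_int)
qed

lemma incl_excl:
  fixes m :: "'a \<Rightarrow> int"
  assumes "finite T" "\<forall>t\<in>T. m t > 0"
  shows "\<And>d. d > 0 \<Longrightarrow> real (card {s\<in>{1..N}. d dvd int s \<and> (\<forall>t\<in>T. \<not> m t dvd int s)}) =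
     (\<Sum>J\<in>Pow T. (-1) ^ card J * of_int \<lfloor>real N / real_of_int (lcm d (Lcm (m ` J)))\<rfloor>)"
  using assms
proof (induction T rule: finite_induct)
  case empty
  have "real N / real_of_int d = real_of_int (int N) / real_of_int d" by simp
  then have "\<lfloor>real N / real_of_int d\<rfloor> = int N div d" by (simp only: floor_divide_of_int_eq)
  moreover have "int N div d \<ge> 0" using empty by (simp add: pos_imp_zdiv_nonneg_iff)
  ultimately show ?case using empty card_mult_upto[of d N]
    by simp
next
  case (insert t T)
  have mt: "m t > 0" using insert by simp
  have mT: "\<forall>t\<in>T. m t > 0" using insert by simp
  define d' where "d' = lcm d (m t)"
  have d': "d' > 0" unfolding d'_def using insert.prems mt
    by (metis lcm_eq_0_iff lcm_ge_0_int less_le)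
  define S where "S = (\<lambda>d. {s\<in>{1..N}. d dvd int s \<and> (\<forall>t\<in>T. \<not> m t dvd int s)})"
  have eq: "{s\<in>{1..N}. d dvd int s \<and> (\<forall>t\<in>insert t T. \<not> m t dvd int s)} = S d - S d'"
    unfolding S_def d'_def by auto
  have sub: "S d' \<subseteq> S d" unfolding S_def d'_def by auto
  have fin: "finite (S d)" unfolding S_def by simp
  have c: "real (card (S d - S d')) = real (card (S d)) - real (card (S d'))"
    using sub fin by (simp add: card_Diff_subset finite_subset card_mono of_nat_diff)
  note IH1 = insert.IH[OF insert.prems(1) mT]
  note IH2 = insert.IH[OF d' mT]
  define F where "F = (\<lambda>J. (-1::real) ^ card J * of_int \<lfloor>real N / real_of_int (lcm d (Lcm (m ` J)))\<rfloor>)"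
  have PI: "Pow (insert t T) = Pow T \<union> insert t ` Pow T" by (rule Pow_insert)
  have disj: "Pow T \<inter> insert t ` Pow T = {}" using insert.hyps by auto
  have inj: "inj_on (insert t) (Pow T)" using insert.hyps unfolding inj_on_def by (metis PowD insert_ident in_mono)
  have "(\<Sum>J\<in>Pow (insert t T). F J) = (\<Sum>J\<in>Pow T. F J) + (\<Sum>J\<in>insert t ` Pow T. F J)"
    unfolding PI using insert.hyps disj by (simp add: sum.union_disjoint)
  also have "(\<Sum>J\<in>insert t ` Pow T. F J) = (\<Sum>J\<in>Pow T. F (insert t J))"
    using inj by (simp add: sum.reindex)
  also have "\<dots> = (\<Sum>J\<in>Pow T. - ((-1) ^ card J * of_int \<lfloor>real N / real_of_int (lcm d' (Lcm (m ` J)))\<rfloor>))"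
  proof (rule sum.cong[OF refl])
    fix J assume J: "J \<in> Pow T"
    have "finite J" using J insert.hyps finite_subset by auto
    moreover have "t \<notin> J" using J insert.hyps by auto
    ultimately have "card (insert t J) = Suc (card J)" by simp
    moreover have "lcm d (Lcm (m ` insert t J)) = lcm d' (Lcm (m ` J))"
      unfolding d'_def by (simp add: lcm.assoc)
    ultimately show "F (insert t J) = - ((-1) ^ card J * of_int \<lfloor>real N / real_of_int (lcm d' (Lcm (m ` J)))\<rfloor>)"
      unfolding F_def by simp
  qed
  finally have sumeq: "(\<Sum>J\<in>Pow (insert t T). F J) = (\<Sum>J\<in>Pow T. F J) -
     (\<Sum>J\<in>Pow T. (-1) ^ card J * of_int \<lfloor>real N / real_of_int (lcm d' (Lcm (m ` J)))\<rfloor>)"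
    by (simp add: sum_negf)
  have "real (card {s\<in>{1..N}. d dvd int s \<and> (\<forall>t\<in>insert t T. \<not> m t dvd int s)})
     = real (card (S d)) - real (card (S d'))" using eq c by simp
  also have "\<dots> = (\<Sum>J\<in>Pow T. F J) -
     (\<Sum>J\<in>Pow T. (-1) ^ card J * of_int \<lfloor>real N / real_of_int (lcm d' (Lcm (m ` J)))\<rfloor>)"
    using IH1 IH2 unfolding S_def F_def by simp
  also have "\<dots> = (\<Sum>J\<in>Pow (insert t T). F J)" using sumeq by simp
  finally show ?case unfolding F_def .
qed

theorem lemma3p9:
  fixes a :: "nat \<Rightarrow> int" and n :: nat
  assumes "n \<ge> 1"
    and "\<forall>i\<in>{1..n}. a i \<ge> 0"
    and "a n \<noteq> 0"
    and "Gcd (a ` {1..n}) = 1"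
  shows "\<forall>d::real.
     ((\<lambda>N. real (card (visL a n \<inter> ({1..N} \<times> {1..N}))) / real N ^ 2) \<longlonglongrightarrow> d)
     \<longleftrightarrow> ((\<lambda>N. rhs_num a n N / real N ^ 2) \<longlonglongrightarrow> d)"
proof -
  have mpos: "mval a n b t > 0" if "b \<ge> 1" "t \<ge> 1" for b t
  proof -
    have A: "polyP a n (int b) > 0" using polyP_pos assms that by simp
    have B: "polyP a n (int t) > 0" using polyP_pos assms that by simp
    have g: "gcd (polyP a n (int b)) (polyP a n (int t)) > 0" using A by simp
    have "gcd (polyP a n (int b)) (polyP a n (int t)) \<le> polyP a n (int b)"
      using A by (simp add: zdvd_imp_le)
    then show ?thesis unfolding mval_def using g by (simp add: pos_imp_zdiv_pos_iff)
  qed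
  have eqN: "real (card (visL a n \<inter> ({1..N} \<times> {1..N}))) = rhs_num a n N" for N
  proof -
    define V where "V = (\<lambda>b. {s\<in>{1..N}. 1 dvd int s \<and> (\<forall>t\<in>{1..b-1}. \<not> mval a n b t dvd int s)})"
    have "visL a n \<inter> ({1..N} \<times> {1..N}) = Sigma {1..N} V"
      unfolding visL_def V_def using visible_iff[OF assms(1-3)] by auto
    then have "card (visL a n \<inter> ({1..N} \<times> {1..N})) = (\<Sum>b\<in>{1..N}. card (V b))"
      by (simp add: V_def)
    then have "real (card (visL a n \<inter> ({1..N} \<times> {1..N}))) = (\<Sum>b\<in>{1..N}. real (card (V b)))"
      by simp
    also have "\<dots> = rhs_num a n N" unfolding rhs_num_def
    proof (rule sum.cong[OF refl])
      fix b assume b: "b \<in> {1..N}"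
      have "\<forall>t\<in>{1..b-1}. mval a n b t > 0" using mpos b by auto
      from incl_excl[OF _ this, of 1 N] show "real (card (V b)) = (\<Sum>J\<in>Pow {1..b-1}.
      (-1) ^ card J * of_int \<lfloor>real N / real_of_int (Lcm (mval a n b ` J))\<rfloor>)"
        unfolding V_def by simp
    qed
    finally show ?thesis .
  qed
  show ?thesis using eqN by simp
qed

end
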